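(* Let $N\ge 1$ be an integer and for each $1\le i\le N$ let $s_i,t_i$ be points in $(\frac{i-1}{N},\frac iN]$. Then for each $p\ge 2$, each $R\gtrsim N^2$ (i.e. $R\ge cN^2$ for a fixed absolute constant $c>0$), each ball $B_R\subset\mathbb{R}^5$ of radius $R$ and each choice of $a_{i,j}\in\mathbb{C}$, $$\Big(\frac1{|B_R|}\int_{B_R}\Big|\sum_{i=1}^N\sum_{j=1}^N a_{i,j}\,e(x_1s_i+x_2t_j+x_3s_i^2+x_4t_j^2+x_5s_it_j)\Big|^p dx\Big)^{1/p}\lesssim D(N^2,p)\,\|a_{i,j}\|_{\ell^p(\{1,\dots,N\}^2)},$$ where the implicit constant does not depend on $N$, $R$, or the $a_{i,j}$.
   Context: $e(z)=e^{2\pi i z}$. For a square $S\subset[0,1]^2$ and $g:S\to\mathbb{C}$, $E_Sg(x)=\int_S g(s,t)e(x_1s+x_2t+x_3s^2+x_4t^2+x_5st)\,ds\,dt$. For a ball $B$ with center $c(B)$ and radius $R$, $w_B(x)=(1+|x-c(B)|/R)^{-100}$ and $\|f\|_{L^p(w_B)}=(\int|f|^pw_B)^{1/p}$. For $M\ge 1$, $D(M,p)$ is the smallest constant such that for all integrable $g:[0,1]^2\to\mathbb{C}$ and all balls $B_M\subset\mathbb{R}^5$ of radius $M$, $\|E_{[0,1]^2}g\|_{L^p(w_{B_M})}\le D(M,p)(\sum_\Delta\|E_\Delta g\|^p_{L^p(w_{B_M})})^{1/p}$, the sum running over a finitely overlapping cover of $[0,1]^2$ by squares $\Delta$ of side $M^{-1/2}$.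 *)

theory Defs
  imports "HOL-Analysis.Analysis"
begin

definition ee :: "real \<Rightarrow> complex" where
  "ee z = exp (2 * pi * \<i> * complex_of_real z)"

definition phase :: "real^5 \<Rightarrow> real \<Rightarrow> real \<Rightarrow> real" where
  "phase x s t = x$1 * s + x$2 * t + x$3 * s^2 + x$4 * t^2 + x$5 * s * t"

definition ext_op :: "(real \<times> real) set \<Rightarrow> (real \<times> real \<Rightarrow> complex) \<Rightarrow> real^5 \<Rightarrow> complex" where
  "ext_op S g x = (LINT y : S | lborel. g y * ee (phase x (fst y) (snd y)))"

definition unit_sq :: "(real \<times> real) set" where
  "unit_sq = {0..1} \<times> {0..1}"

definition wB :: "real^5 \<Rightarrow> real \<Rightarrow> real^5 \<Rightarrow> real" where
  "wB c R x = (1 + dist x c / R) powr (-100)"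

definition Lp_w :: "real \<Rightarrow> real^5 \<Rightarrow> real \<Rightarrow> (real^5 \<Rightarrow> complex) \<Rightarrow> real" where
  "Lp_w p c R f = (LINT x | lborel. cmod (f x) powr p * wB c R x) powr (1 / p)"

text \<open>The cover of [0,1]^2 by squares of side M^(-1/2): the grid squares
  [k d,(k+1) d] x [l d,(l+1) d], d = M^(-1/2), 0 <= k,l < ceil(M^(1/2)),
  intersected with [0,1]^2 (g lives on [0,1]^2).\<close>
definition grid_n :: "real \<Rightarrow> nat" where
  "grid_n M = nat \<lceil>sqrt M\<rceil>"

definition grid_sq :: "real \<Rightarrow> nat \<Rightarrow> nat \<Rightarrow> (real \<times> real) set" where
  "grid_sq M k l = ({real k / sqrt M .. real (k+1) / sqrt M}
                    \<times> {real l / sqrt M .. real (l+1) / sqrt M}) \<inter> unit_sq"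

definition Dec :: "real \<Rightarrow> real \<Rightarrow> real" where
  "Dec M p = Inf {C. C \<ge> 0 \<and>
     (\<forall>g c. set_integrable lborel unit_sq g \<longrightarrow>
        Lp_w p c M (ext_op unit_sq g)
          \<le> C * (\<Sum>kl \<in> {..<grid_n M} \<times> {..<grid_n M}.
                    Lp_w p c M (ext_op (grid_sq M (fst kl) (snd kl)) g) powr p) powr (1 / p))}"

end

theory Submission
  imports Defs
begin



lemma cont_ee_phase: "continuous_on UNIV (\<lambda>z::(real^5) \<times> (real \<times> real). ee (phase (fst z) (fst (snd z)) (snd (snd z))))"
  unfolding ee_def phase_def
  by (intro continuous_intros)

lemma meas_ee_phase: "(\<lambda>z::(real^5) \<times> (real \<times> real). ee (phase (fst z) (fst (snd z)) (snd (snd z)))) \<in> borel_measurable (lborel \<Otimes>\<^sub>M lborel)"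
  unfolding lborel_prod
  using cont_ee_phase borel_measurable_continuous_onI by (simp add: borel_measurable_continuous_onI)

lemma ext_op_meas:
  assumes "set_integrable lborel S g"
  shows "ext_op S g \<in> borel_measurable lborel"
proof -
  have h: "(\<lambda>y. indicator S y *\<^sub>R g y) \<in> borel_measurable lborel"
    using assms unfolding set_integrable_def by (rule borel_measurable_integrable)
  have "(\<lambda>z::(real^5) \<times> (real \<times> real). (indicator S (snd z) *\<^sub>R g (snd z)) * ee (phase (fst z) (fst (snd z)) (snd (snd z)))) \<in> borel_measurable (lborel \<Otimes>\<^sub>M lborel)"
    apply (intro borel_measurable_times meas_ee_phase)
    using measurable_compose[OF measurable_snd h] by (auto simp: comp_def)
  then have "case_prod (\<lambda>x y. indicator S y *\<^sub>R (g y * ee (phase x (fst y) (snd y)))) \<in> borel_measurable (lborel \<Otimes>\<^sub>M lborel)"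
    by (simp add: case_prod_beta mult.assoc)
  from lborel.borel_measurable_lebesgue_integral[OF this]
  show ?thesis unfolding ext_op_def set_lebesgue_integral_def by simp
qed



lemma ennreal_le_suminf: "(f k :: ennreal) \<le> (\<Sum>n. f n)"
  using ennreal_suminf_lessD verit_comp_simplify1(3) by blast

lemma wB_meas[measurable]: "wB c M \<in> borel_measurable lborel"
  unfolding wB_def by measurable

lemma wB_alt: "M > 0 \<Longrightarrow> wB c M x = 1 / (1 + dist x c / M) ^ 100"
proof -
  assume M: "M > 0"
  have pos: "1 + dist x c / M > 0" using M by (simp add: add_pos_nonneg)
  show ?thesis unfolding wB_def using pos
    by (simp add: powr_minus powr_numeral divide_inverse)
qed

lemma wB_nonneg: "wB c M x \<ge> 0" unfolding wB_def by simp

lemma wB_le1: "M > 0 \<Longrightarrow> wB c M x \<le> 1"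
proof -
  assume M: "M > 0"
  have "1 \<le> (1 + dist x c / M) ^ 100" by (rule one_le_power) (use M in simp)
  then show ?thesis by (simp add: wB_alt[OF M] divide_le_eq_1)
qed

lemma wB_pt:
  assumes M: "M > 0"
  shows "ennreal (wB c M x) \<le> (\<Sum>k. ennreal ((1/2^100)^k) * indicator (ball c (2^(Suc k)*M)) x)"
proof -
  define d where "d = dist x c"
  have "\<exists>k. d / M < 2 ^ k" using real_arch_pow[of 2 "d/M"] by auto
  then have ex: "\<exists>k. d < 2 ^ Suc k * M"
    using M by (metis less_divide_eq mult.commute power_Suc mult_2 pos_divide_less_eq order.strict_trans2 le_add_same_cancel1 zero_le_power zero_le_numeral less_eq_real_def)
  define k where "k = (LEAST k. d < 2 ^ Suc k * M)"
  have k1: "d < 2 ^ Suc k * M" unfolding k_def by (rule LeastI_ex[OF ex])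
  have "wB c M x \<le> (1/2^100)^k"
  proof (cases k)
    case 0 then show ?thesis using wB_le1[OF M] by simp
  next
    case (Suc j)
    have "\<not> d < 2 ^ Suc j * M" using not_less_Least[of j "\<lambda>k. d < 2 ^ Suc k * M"] Suc k_def by simp
    then have "2 ^ k \<le> d / M" using M Suc by (simp add: pos_le_divide_eq)
    then have "2 ^ k \<le> 1 + d / M" by simp
    then have "(2 ^ k) ^ 100 \<le> (1 + d / M) ^ 100" by (intro power_mono) auto
    then have "1 / (1 + d / M) ^ 100 \<le> 1 / (2^k)^100"
      using M d_def by (intro divide_left_mono) (auto intro!: mult_pos_pos add_pos_nonneg zero_less_power)
    also have "1 / (2^k)^100 = ((1::real)/2^100)^k"
    proof -
      have "((2::real)^k)^100 = (2^100)^k" by (metis power_mult mult.commute)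
      then show ?thesis by (simp add: power_one_over)
    qed
    finally show ?thesis using wB_alt[OF M] d_def by (simp add: dist_commute)
  qed
  moreover have "x \<in> ball c (2^(Suc k)*M)" using k1 d_def by (simp add: dist_commute)
  ultimately have "ennreal (wB c M x) \<le> ennreal ((1/2^100)^k) * indicator (ball c (2^(Suc k)*M)) x"
    by (simp add: ennreal_leI)
  also have "\<dots> \<le> (\<Sum>k. ennreal ((1/2^100)^k) * indicator (ball c (2^(Suc k)*M)) x)"
    by (rule ennreal_le_suminf)
  finally show ?thesis .
qed

lemma unit_ball_vol_pos: "unit_ball_vol 5 > 0"
  using content_ball_pos[where c="0::real^5" and r=1] content_ball[where c="0::real^5" and r=1] by simp

lemma wB_int_bound:
  assumes M: "M > 0"
  shows "(\<integral>\<^sup>+x. ennreal (wB c M x) \<partial>lborel) \<le> ennreal (64 * unit_ball_vol 5 * M^5)"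
proof -
  define V where "V = unit_ball_vol 5"
  define r :: real where "r = 1 / 2^100"
  define q :: real where "q = 32 * r"
  have q: "0 \<le> q" "q < 1" unfolding q_def r_def by auto
  have trm: "r^k * (V * (2^Suc k * M)^5) = (32 * V * M^5) * q^k" for k
  proof -
    have "((2::real)^Suc k)^5 = 32 * 32^k"
    proof -
      have "((2::real)^Suc k)^5 = (2^5)^(Suc k)" by (metis power_mult mult.commute)
      then show ?thesis by simp
    qed
    then show ?thesis unfolding q_def by (simp add: power_mult_distrib algebra_simps)
  qed
  have "(\<integral>\<^sup>+x. ennreal (wB c M x) \<partial>lborel) \<le> (\<integral>\<^sup>+x. (\<Sum>k. ennreal ((1/2^100)^k) * indicator (ball c (2^(Suc k)*M)) x) \<partial>lborel)"
    by (intro nn_integral_mono wB_pt M)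
  also have "\<dots> = (\<Sum>k. \<integral>\<^sup>+x. ennreal ((1/2^100)^k) * indicator (ball c (2^(Suc k)*M)) x \<partial>lborel)"
    by (intro nn_integral_suminf borel_measurable_times_ennreal borel_measurable_const borel_measurable_indicator) auto
  also have "\<dots> = (\<Sum>k. ennreal (r^k * (V * (2^Suc k * M)^5)))"
    unfolding r_def using M unit_ball_vol_pos by (simp add: nn_integral_cmult_indicator emeasure_ball V_def ennreal_mult)
  also have "\<dots> = (\<Sum>k. ennreal ((32 * V * M^5) * q^k))"
    by (simp only: trm)
  also have "\<dots> = ennreal (\<Sum>k. (32 * V * M^5) * q^k)"
    using q M unit_ball_vol_pos V_def
    by (intro suminf_ennreal2) (auto intro!: summable_mult summable_geometric)
  also have "(\<Sum>k. (32 * V * M^5) * q^k) = (32 * V * M^5) * (1 / (1 - q))"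
    using q by (simp add: suminf_mult suminf_geometric)
  also have "\<dots> \<le> (32 * V * M^5) * 2"
    using q M unit_ball_vol_pos V_def unfolding q_def r_def by (intro mult_left_mono) (auto simp: divide_simps)
  finally show ?thesis unfolding V_def by (simp add: ennreal_leI mult_ac order_trans)
qed


lemma wB_integrable: "M > 0 \<Longrightarrow> integrable lborel (wB c M)"
  using wB_int_bound[of M c]
  by (intro integrableI_bounded) (auto simp: wB_nonneg top_unique ennreal_mult_less_top less_top[symmetric] dest: order.strict_trans1[rotated])

lemma wB_integral_le: "M > 0 \<Longrightarrow> (LINT x|lborel. wB c M x) \<le> 64 * unit_ball_vol 5 * M^5"
proof -
  assume M: "M > 0"
  have "ennreal (LINT x|lborel. wB c M x) = (\<integral>\<^sup>+x. ennreal (wB c M x) \<partial>lborel)"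
    by (rule nn_integral_eq_integral[symmetric]) (auto simp: wB_integrable[OF M] wB_nonneg)
  also have "\<dots> \<le> ennreal (64 * unit_ball_vol 5 * M^5)" by (rule wB_int_bound[OF M])
  finally show ?thesis using M unit_ball_vol_pos by (simp add: ennreal_le_iff)
qed

lemma norm_ee[simp]: "cmod (ee z) = 1"
  unfolding ee_def by (metis norm_exp_i_times mult.commute mult.left_commute of_real_mult of_real_numeral)

lemma ext_op_bound:
  assumes "set_integrable lborel S g"
  shows "cmod (ext_op S g x) \<le> (LINT y|lborel. norm (indicator S y *\<^sub>R g y))"
proof -
  have "cmod (ext_op S g x) \<le> (LINT y|lborel. norm (indicator S y *\<^sub>R (g y * ee (phase x (fst y) (snd y)))))"
    unfolding ext_op_def set_lebesgue_integral_def by (rule integral_norm_bound)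
  also have "\<dots> = (LINT y|lborel. norm (indicator S y *\<^sub>R g y))"
    by (simp add: norm_mult)
  finally show ?thesis .
qed

lemma ext_integrable:
  assumes "set_integrable lborel S g" "M > 0" "p \<ge> 0"
  shows "integrable lborel (\<lambda>x. cmod (ext_op S g x) powr p * wB c M x)"
proof -
  define G where "G = (LINT y|lborel. norm (indicator S y *\<^sub>R g y))"
  have i1: "integrable lborel (\<lambda>x. G powr p * wB c M x)"
    using wB_integrable[OF assms(2)] by simp
  have i2: "(\<lambda>x. cmod (ext_op S g x) powr p * wB c M x) \<in> borel_measurable lborel"
    using ext_op_meas[OF assms(1)] by measurable
  have i3: "AE x in lborel. norm (cmod (ext_op S g x) powr p * wB c M x) \<le> norm (G powr p * wB c M x)"
  proof (intro AE_I2)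
    fix x
    have "cmod (ext_op S g x) \<le> G" unfolding G_def by (rule ext_op_bound[OF assms(1)])
    then have "cmod (ext_op S g x) powr p \<le> G powr p"
      using assms(3) by (intro powr_mono2) auto
    then show "norm (cmod (ext_op S g x) powr p * wB c M x) \<le> norm (G powr p * wB c M x)"
      by (simp add: wB_nonneg abs_mult mult_right_mono)
  qed
  show ?thesis by (rule Bochner_Integration.integrable_bound[OF i1 i2 i3])
qed




lemma grid_sq_sets: "grid_sq M k l \<in> sets lborel"
  unfolding grid_sq_def unit_sq_def sets_lborel
  by (intro borel_closed closed_Int closed_Times) auto

lemma unit_sq_sets: "unit_sq \<in> sets lborel"
  unfolding unit_sq_def sets_lborel by (intro borel_closed closed_Times) auto

lemma grid_sq_sub: "grid_sq M k l \<subseteq> unit_sq" unfolding grid_sq_def by auto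

lemma sqrtN: "sqrt ((real N)^2) = real N" by simp

lemma grid_nN: "grid_n ((real N)^2) = N" unfolding grid_n_def by simp

lemma grid_1d:
  assumes N: "N \<ge> 1" and u: "u \<notin> (\<lambda>k. real k / real N) ` {..N}"
  shows "(\<Sum>k<N. indicator {real k / real N .. real (k+1) / real N} u :: real) = indicator {0..1} u"
proof (cases "u \<in> {0..1}")
  case True
  define k0 where "k0 = nat \<lfloor>u * N\<rfloor>"
  have Npos: "real N > 0" using N by simp
  have fl: "real k0 \<le> u * N" "u * N < real k0 + 1"
    unfolding k0_def using True Npos by (auto simp: of_nat_nat)
  have "real k0 \<noteq> u * N"
  proof
    assume h: "real k0 = u * N"
    have "u * real N \<le> 1 * real N" using True Npos by (intro mult_right_mono) auto
    then have "k0 \<le> N" using h by simp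
    moreover have "u = real k0 / real N" using h Npos by (simp add: field_simps)
    ultimately show False using u by auto
  qed
  with fl have fl2: "real k0 < u * N" by simp
  have "k0 < N"
  proof (rule ccontr)
    assume "\<not> k0 < N" then have "real N \<le> real k0" by simp
    then have "real N < u * N" using fl2 by simp
    then show False using True Npos by (simp add: mult_le_cancel_right1)
  qed
  have iff: "u \<in> {real k / real N .. real (k+1) / real N} \<longleftrightarrow> k = k0" for k
  proof
    assume "u \<in> {real k / real N .. real (k+1) / real N}"
    then have a: "real k \<le> u * N" "u * N \<le> real k + 1" using Npos by (auto simp: field_simps)
    have "k \<noteq> k0 \<Longrightarrow> False"
    proof -
      assume ne: "k \<noteq> k0"
      show False
      proof (cases "k < k0")
        case True then have "real k + 1 \<le> real k0" by simp
        then show False using a fl2 by simp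
      next
        case False then have "real k0 + 1 \<le> real k" using ne by simp
        then show False using a fl by simp
      qed
    qed
    then show "k = k0" by blast
  next
    assume "k = k0"
    then show "u \<in> {real k / real N .. real (k+1) / real N}" using fl fl2 Npos by (auto simp: field_simps)
  qed
  have "(\<Sum>k<N. indicator {real k / real N .. real (k+1) / real N} u :: real) = (\<Sum>k<N. if k = k0 then 1 else 0)"
    by (intro sum.cong refl) (simp only: indicator_def of_bool_def iff)
  also have "\<dots> = 1" using \<open>k0 < N\<close> by simp
  finally show ?thesis using True by simp
next
  case False
  have "u \<notin> {real k / real N .. real (k+1) / real N}" if "k < N" for k
  proof
    assume h: "u \<in> {real k / real N .. real (k+1) / real N}"
    have "real k / real N \<ge> 0" by simp
    moreover have "real (k+1) / real N \<le> 1" using that by (simp add: divide_le_eq_1)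
    ultimately show False using h False unfolding atLeastAtMost_iff by linarith
  qed
  then have "(\<Sum>k<N. indicator {real k / real N .. real (k+1) / real N} u :: real) = (\<Sum>k<N. 0)"
    by (intro sum.cong refl) (simp add: indicator_def del: of_nat_add of_nat_Suc)
  then show ?thesis using False by simp
qed

lemma sum_prod3: "(\<Sum>k\<in>A. \<Sum>l\<in>B. a k * b l * c) = (sum a A) * (sum b B) * (c::real)"
proof -
  have "(\<Sum>k\<in>A. \<Sum>l\<in>B. a k * b l * c) = (\<Sum>k\<in>A. a k * (\<Sum>l\<in>B. b l) * c)"
    by (intro sum.cong refl) (simp add: sum_distrib_left sum_distrib_right)
  also have "\<dots> = (sum a A) * (sum b B) * c" by (simp add: sum_distrib_right)
  finally show ?thesis .
qed

lemma grid_2d: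
  assumes N: "N \<ge> 1"
    and y1: "fst y \<notin> (\<lambda>k. real k / real N) ` {..N}" and y2: "snd y \<notin> (\<lambda>k. real k / real N) ` {..N}"
  shows "(\<Sum>kl\<in>{..<N}\<times>{..<N}. indicator (grid_sq ((real N)^2) (fst kl) (snd kl)) y :: real) = indicator unit_sq y"
proof -
  have ind: "indicator (grid_sq ((real N)^2) k l) y =
      indicator {real k / real N .. real (k+1) / real N} (fst y) * indicator {real l / real N .. real (l+1) / real N} (snd y) * (indicator unit_sq y :: real)" for k l
    unfolding grid_sq_def by (cases y) (simp add: indicator_def del: of_nat_add of_nat_Suc)
  have "(\<Sum>kl\<in>{..<N}\<times>{..<N}. indicator (grid_sq ((real N)^2) (fst kl) (snd kl)) y :: real)
      = (\<Sum>k<N. \<Sum>l<N. indicator (grid_sq ((real N)^2) k l) y)"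
    by (simp add: sum.cartesian_product case_prod_beta)
  also have "\<dots> = (\<Sum>k<N. indicator {real k / real N .. real (k+1) / real N} (fst y)) * (\<Sum>l<N. indicator {real l / real N .. real (l+1) / real N} (snd y)) * (indicator unit_sq y :: real)"
    by (simp only: ind sum_prod3)
  also have "\<dots> = indicator {0..1} (fst y) * indicator {0..1} (snd y) * indicator unit_sq y"
    using grid_1d[OF N y1] grid_1d[OF N y2] by simp
  also have "\<dots> = indicator unit_sq y"
    unfolding unit_sq_def by (cases y) (simp add: indicator_def)
  finally show ?thesis .
qed

lemma AE_grid:
  assumes "finite E"
  shows "AE y in (lborel :: (real \<times> real) measure). fst y \<notin> E \<and> snd y \<notin> E"
proof (rule AE_I')
  have "E \<times> UNIV \<in> null_sets (lborel \<Otimes>\<^sub>M (lborel::real measure))"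
    using assms by (intro lborel.times_in_null_sets1 finite_imp_null_set_lborel) auto
  moreover have "UNIV \<times> E \<in> null_sets ((lborel::real measure) \<Otimes>\<^sub>M lborel)"
    using assms by (intro lborel.times_in_null_sets2 finite_imp_null_set_lborel) auto
  ultimately show "E \<times> UNIV \<union> UNIV \<times> E \<in> null_sets (lborel :: (real \<times> real) measure)"
    unfolding lborel_prod by auto
  show "{y \<in> space lborel. \<not> (fst y \<notin> E \<and> snd y \<notin> E)} \<subseteq> E \<times> UNIV \<union> UNIV \<times> E"
    by auto
qed

lemma meas_ee_x: "(\<lambda>y::real\<times>real. ee (phase x (fst y) (snd y))) \<in> borel_measurable lborel"
  unfolding measurable_lborel2 by (intro borel_measurable_continuous_onI) (unfold ee_def phase_def, intro continuous_intros)

lemma int_sub: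
  assumes g: "set_integrable lborel U g" and S: "S \<in> sets lborel" "S \<subseteq> U"
  shows "integrable lborel (\<lambda>y. indicator S y *\<^sub>R (g y * ee (phase x (fst y) (snd y))))"
proof -
  have f: "integrable lborel (\<lambda>y. indicator U y *\<^sub>R g y)" using g unfolding set_integrable_def .
  have fm: "(\<lambda>y. indicator U y *\<^sub>R g y) \<in> borel_measurable lborel" using borel_measurable_integrable[OF f] .
  have eq: "(\<lambda>y. indicator S y *\<^sub>R (g y * ee (phase x (fst y) (snd y)))) = (\<lambda>y. indicator S y *\<^sub>R ((indicator U y *\<^sub>R g y) * ee (phase x (fst y) (snd y))))"
    using S by (auto simp: indicator_def fun_eq_iff)
  have m: "(\<lambda>y. indicator S y *\<^sub>R ((indicator U y *\<^sub>R g y) * ee (phase x (fst y) (snd y)))) \<in> borel_measurable lborel"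
    using S fm meas_ee_x by measurable
  have b: "AE y in lborel. norm (indicator S y *\<^sub>R ((indicator U y *\<^sub>R g y) * ee (phase x (fst y) (snd y)))) \<le> norm (indicator U y *\<^sub>R g y)"
    using S by (intro AE_I2) (auto simp: indicator_def norm_mult)
  show ?thesis unfolding eq by (rule Bochner_Integration.integrable_bound[OF f m b])
qed

lemma ext_decomp:
  assumes N: "N \<ge> 1" and g: "set_integrable lborel unit_sq g"
  shows "ext_op unit_sq g x = (\<Sum>kl\<in>{..<N}\<times>{..<N}. ext_op (grid_sq ((real N)^2) (fst kl) (snd kl)) g x)"
proof -
  define h where "h y = g y * ee (phase x (fst y) (snd y))" for y
  define G where "G kl = grid_sq ((real N)^2) (fst kl) (snd kl)" for kl
  have ints: "integrable lborel (\<lambda>y. indicator (G kl) y *\<^sub>R h y)" for kl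
    unfolding G_def h_def by (rule int_sub[OF g grid_sq_sets grid_sq_sub])
  have intU: "integrable lborel (\<lambda>y. indicator unit_sq y *\<^sub>R h y)"
    unfolding h_def by (rule int_sub[OF g unit_sq_sets order_refl])
  have "(\<Sum>kl\<in>{..<N}\<times>{..<N}. ext_op (G kl) g x) = (\<Sum>kl\<in>{..<N}\<times>{..<N}. LINT y|lborel. indicator (G kl) y *\<^sub>R h y)"
    unfolding ext_op_def set_lebesgue_integral_def h_def by simp
  also have "\<dots> = (LINT y|lborel. (\<Sum>kl\<in>{..<N}\<times>{..<N}. indicator (G kl) y *\<^sub>R h y))"
    by (rule Bochner_Integration.integral_sum[symmetric]) (rule ints)
  also have "\<dots> = (LINT y|lborel. indicator unit_sq y *\<^sub>R h y)"
  proof (rule integral_cong_AE)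
    show "(\<lambda>y. \<Sum>kl\<in>{..<N}\<times>{..<N}. indicator (G kl) y *\<^sub>R h y) \<in> borel_measurable lborel"
      using ints by (intro borel_measurable_sum borel_measurable_integrable)
    show "(\<lambda>y. indicator unit_sq y *\<^sub>R h y) \<in> borel_measurable lborel"
      using intU by (rule borel_measurable_integrable)
    have fin: "finite ((\<lambda>k. real k / real N) ` {..N})" by simp
    show "AE y in lborel. (\<Sum>kl\<in>{..<N}\<times>{..<N}. indicator (G kl) y *\<^sub>R h y) = indicator unit_sq y *\<^sub>R h y"
      using AE_grid[OF fin]
    proof (rule AE_mp, intro AE_I2 impI)
      fix y :: "real \<times> real"
      assume "fst y \<notin> (\<lambda>k. real k / real N) ` {..N} \<and> snd y \<notin> (\<lambda>k. real k / real N) ` {..N}"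
      then have "(\<Sum>kl\<in>{..<N}\<times>{..<N}. indicator (G kl) y :: real) = indicator unit_sq y"
        unfolding G_def using grid_2d[OF N] by blast
      then show "(\<Sum>kl\<in>{..<N}\<times>{..<N}. indicator (G kl) y *\<^sub>R h y) = indicator unit_sq y *\<^sub>R h y"
        by (simp add: scaleR_sum_left[symmetric])
    qed
  qed
  also have "\<dots> = ext_op unit_sq g x"
    unfolding ext_op_def set_lebesgue_integral_def h_def by simp
  finally show ?thesis unfolding G_def by simp
qed




lemma pow_sum_bound:
  assumes K: "finite K" and p: "p > 0" and b: "\<And>k. k \<in> K \<Longrightarrow> b k \<ge> (0::real)"
  shows "(\<Sum>k\<in>K. b k) powr p \<le> real (card K) powr p * (\<Sum>k\<in>K. b k powr p)"
proof -
  define T where "T = (\<Sum>k\<in>K. b k powr p) powr (1/p)"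
  have T0: "T \<ge> 0" unfolding T_def by simp
  have bk: "b k \<le> T" if k: "k \<in> K" for k
  proof -
    have "b k powr p \<le> (\<Sum>k\<in>K. b k powr p)"
      using K k by (intro member_le_sum) auto
    then have "(b k powr p) powr (1/p) \<le> T" unfolding T_def using p by (intro powr_mono2) auto
    then show ?thesis using b[OF k] p by (simp add: powr_powr)
  qed
  have "(\<Sum>k\<in>K. b k) \<le> (\<Sum>k\<in>K. T)" using bk by (intro sum_mono) auto
  also have "\<dots> = real (card K) * T" by simp
  finally have s: "(\<Sum>k\<in>K. b k) \<le> real (card K) * T" .
  have "(\<Sum>k\<in>K. b k) powr p \<le> (real (card K) * T) powr p"
    using s p b by (intro powr_mono2) (auto intro: sum_nonneg)
  also have "\<dots> = real (card K) powr p * T powr p" using T0 by (simp add: powr_mult)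
  also have "T powr p = (\<Sum>k\<in>K. b k powr p)" unfolding T_def using p
    by (simp add: powr_powr sum_nonneg)
  finally show ?thesis .
qed

lemma cmod_sum_pow:
  assumes K: "finite K" and p: "p > 0"
  shows "cmod (\<Sum>k\<in>K. z k) powr p \<le> real (card K) powr p * (\<Sum>k\<in>K. cmod (z k) powr p)"
proof -
  have "cmod (\<Sum>k\<in>K. z k) powr p \<le> (\<Sum>k\<in>K. cmod (z k)) powr p"
    using p by (intro powr_mono2 norm_sum) auto
  also have "\<dots> \<le> real (card K) powr p * (\<Sum>k\<in>K. cmod (z k) powr p)"
    by (rule pow_sum_bound[OF K p]) auto
  finally show ?thesis .
qed

lemma Lp_w_pow: "p > 0 \<Longrightarrow> Lp_w p c M f powr p = (LINT x|lborel. cmod (f x) powr p * wB c M x)"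
  unfolding Lp_w_def by (simp add: powr_powr integral_nonneg wB_nonneg)

lemma Lp_w_nonneg: "Lp_w p c M f \<ge> 0" unfolding Lp_w_def by simp

lemma Lp_w_eq: "p > 0 \<Longrightarrow> Lp_w p c M f = (LINT x|lborel. cmod (f x) powr p * wB c M x) powr (1/p)"
  unfolding Lp_w_def ..

lemma Dec_nonempty:
  assumes N: "N \<ge> 1" and p: "p > 0" and g: "set_integrable lborel unit_sq g"
  defines "M \<equiv> (real N)^2"
  shows "Lp_w p c M (ext_op unit_sq g)
    \<le> real (N*N) * (\<Sum>kl \<in> {..<grid_n M} \<times> {..<grid_n M}. Lp_w p c M (ext_op (grid_sq M (fst kl) (snd kl)) g) powr p) powr (1 / p)"
proof -
  define K where "K = {..<N} \<times> {..<N}"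
  have K: "finite K" "card K = N * N" unfolding K_def by auto
  have gn: "grid_n M = N" unfolding M_def by (rule grid_nN)
  have Mpos: "M > 0" unfolding M_def using N by simp
  define E where "E kl = ext_op (grid_sq M (fst kl) (snd kl)) g" for kl
  have gk: "set_integrable lborel (grid_sq M k l) g" for k l
    by (rule set_integrable_subset[OF g grid_sq_sets grid_sq_sub])
  have intE: "integrable lborel (\<lambda>x. cmod (E kl x) powr p * wB c M x)" for kl
    unfolding E_def using gk Mpos p by (intro ext_integrable) auto
  define I where "I kl = (LINT x|lborel. cmod (E kl x) powr p * wB c M x)" for kl
  have I0: "I kl \<ge> 0" for kl unfolding I_def by (intro Bochner_Integration.integral_nonneg) (auto simp: wB_nonneg)
  define C0 where "C0 = real (N*N)"
  have C0: "C0 \<ge> 0" unfolding C0_def by simp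
  have dec: "ext_op unit_sq g x = (\<Sum>kl\<in>K. E kl x)" for x
    unfolding K_def E_def M_def by (rule ext_decomp[OF N g])
  have main: "(LINT x|lborel. cmod (ext_op unit_sq g x) powr p * wB c M x) \<le> C0 powr p * (\<Sum>kl\<in>K. I kl)"
  proof (cases "integrable lborel (\<lambda>x. cmod (ext_op unit_sq g x) powr p * wB c M x)")
    case True
    have "(LINT x|lborel. cmod (ext_op unit_sq g x) powr p * wB c M x) \<le> (LINT x|lborel. C0 powr p * (\<Sum>kl\<in>K. cmod (E kl x) powr p * wB c M x))"
    proof (rule integral_mono[OF True])
      show "integrable lborel (\<lambda>x. C0 powr p * (\<Sum>kl\<in>K. cmod (E kl x) powr p * wB c M x))"
        using intE by (intro integrable_mult_right integrable_sum) auto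
      fix x
      have "cmod (ext_op unit_sq g x) powr p \<le> C0 powr p * (\<Sum>kl\<in>K. cmod (E kl x) powr p)"
        unfolding dec C0_def using cmod_sum_pow[OF K(1) p, of "\<lambda>kl. E kl x"] K(2) by simp
      then have "cmod (ext_op unit_sq g x) powr p * wB c M x \<le> C0 powr p * (\<Sum>kl\<in>K. cmod (E kl x) powr p) * wB c M x"
        by (intro mult_right_mono) (auto simp: wB_nonneg)
      then show "cmod (ext_op unit_sq g x) powr p * wB c M x \<le> C0 powr p * (\<Sum>kl\<in>K. cmod (E kl x) powr p * wB c M x)"
        by (simp add: sum_distrib_right mult.assoc)
    qed
    also have "\<dots> = C0 powr p * (\<Sum>kl\<in>K. I kl)"
      unfolding I_def using intE by (simp add: Bochner_Integration.integral_sum)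
    finally show ?thesis .
  next
    case False
    then show ?thesis using I0 by (simp add: not_integrable_integral_eq sum_nonneg)
  qed
  have "Lp_w p c M (ext_op unit_sq g) \<le> (C0 powr p * (\<Sum>kl\<in>K. I kl)) powr (1/p)"
    unfolding Lp_w_eq[OF p] using main p by (intro powr_mono2) (auto intro: Bochner_Integration.integral_nonneg simp: wB_nonneg)
  also have "\<dots> = C0 * (\<Sum>kl\<in>K. I kl) powr (1/p)"
    using C0 p I0 by (simp add: powr_mult powr_powr sum_nonneg)
  also have "(\<Sum>kl\<in>K. I kl) = (\<Sum>kl \<in> {..<grid_n M} \<times> {..<grid_n M}. Lp_w p c M (ext_op (grid_sq M (fst kl) (snd kl)) g) powr p)"
    unfolding gn K_def I_def E_def using p by (simp add: Lp_w_pow)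
  finally show ?thesis unfolding C0_def .
qed

lemma Dec_prop:
  assumes N: "N \<ge> 1" and p: "p > 0" and g: "set_integrable lborel unit_sq g"
  defines "M \<equiv> (real N)^2"
  shows "Lp_w p c M (ext_op unit_sq g)
    \<le> Dec M p * (\<Sum>kl \<in> {..<grid_n M} \<times> {..<grid_n M}. Lp_w p c M (ext_op (grid_sq M (fst kl) (snd kl)) g) powr p) powr (1 / p)"
    and "Dec M p \<ge> 0"
proof -
  define X where "X = {C. C \<ge> 0 \<and>
     (\<forall>g c. set_integrable lborel unit_sq g \<longrightarrow>
        Lp_w p c M (ext_op unit_sq g)
          \<le> C * (\<Sum>kl \<in> {..<grid_n M} \<times> {..<grid_n M}.
                    Lp_w p c M (ext_op (grid_sq M (fst kl) (snd kl)) g) powr p) powr (1 / p))}"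
  have D: "Dec M p = Inf X" unfolding Dec_def X_def ..
  have ne: "real (N*N) \<in> X" unfolding X_def M_def using Dec_nonempty[OF N p] by simp
  then have Xne: "X \<noteq> {}" by auto
  show "Dec M p \<ge> 0" unfolding D using Xne by (intro cInf_greatest) (auto simp: X_def)
  define S where "S = (\<Sum>kl \<in> {..<grid_n M} \<times> {..<grid_n M}. Lp_w p c M (ext_op (grid_sq M (fst kl) (snd kl)) g) powr p) powr (1 / p)"
  have S0: "S \<ge> 0" unfolding S_def by simp
  have all: "Lp_w p c M (ext_op unit_sq g) \<le> C * S" if "C \<in> X" for C
    using that g unfolding X_def S_def by auto
  show "Lp_w p c M (ext_op unit_sq g) \<le> Dec M p * S"
  proof (cases "S = 0")
    case True then show ?thesis using all[OF ne] by simp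
  next
    case False
    then have Sp: "S > 0" using S0 by simp
    have "Lp_w p c M (ext_op unit_sq g) / S \<le> Inf X"
      using Xne all Sp by (intro cInf_greatest) (auto simp: divide_le_eq)
    then show ?thesis unfolding D using Sp by (simp add: divide_le_eq mult.commute)
  qed
qed




lemma ball_pred[measurable]: "Measurable.pred borel (\<lambda>x::'a::euclidean_space. x \<in> ball a r)"
proof -
  have "{x \<in> space borel. x \<in> ball a r} \<in> sets (borel :: 'a measure)" by simp
  from pred_sets1[OF this measurable_id] show ?thesis by (simp add: id_def)
qed

lemma wB_meas_c[measurable]: "(\<lambda>c. wB c M x) \<in> borel_measurable lborel"
  unfolding wB_def by measurable

lemma ball_int: "k \<ge> 0 \<Longrightarrow> r \<ge> 0 \<Longrightarrow> (\<integral>\<^sup>+c. indicator (ball (x::real^5) r) c * ennreal k \<partial>lborel) = ennreal (unit_ball_vol 5 * r^5 * k)"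
  using unit_ball_vol_pos by (subst nn_integral_multc) (auto simp: emeasure_ball ennreal_mult borel_measurable_indicator)

lemma lower_w:
  assumes M: "M > 0" and RM: "M \<le> R" and x: "x \<in> ball x0 R"
  shows "ennreal (unit_ball_vol 5 * M^5 / 2^100) \<le> (\<integral>\<^sup>+c. indicator (ball x0 (2*R)) c * ennreal (wB c M x) \<partial>lborel)"
proof -
  have pt: "indicator (ball x M) c * ennreal (1/2^100) \<le> indicator (ball x0 (2*R)) c * ennreal (wB c M x)" for c
  proof (cases "c \<in> ball x M")
    case True
    then have d: "dist x c < M" by simp
    have "dist x0 c \<le> dist x0 x + dist x c" by (rule dist_triangle)
    then have "c \<in> ball x0 (2*R)" using x d RM by auto
    moreover have "1/2^100 \<le> wB c M x"
    proof -
      have "1 + dist x c / M \<le> 2" using d M by simp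
      then have "(1 + dist x c / M)^100 \<le> 2^100" using M by (intro power_mono) (auto intro!: add_nonneg_nonneg)
      moreover have "1 + dist x c / M > 0" using M by (simp add: add_pos_nonneg)
      ultimately have "1 / 2^100 \<le> 1 / (1 + dist x c / M)^100"
        using M by (intro divide_left_mono) (auto intro!: zero_less_power add_pos_nonneg)
      then show ?thesis using wB_alt[OF M] by (simp add: dist_commute)
    qed
    ultimately show ?thesis using True by (simp add: ennreal_leI)
  next
    case False then show ?thesis by simp
  qed
  have "ennreal (unit_ball_vol 5 * M^5 / 2^100) = (\<integral>\<^sup>+c. indicator (ball x M) c * ennreal (1/2^100) \<partial>lborel)"
    using ball_int[of "1/2^100" M x] M by simp
  also have "\<dots> \<le> (\<integral>\<^sup>+c. indicator (ball x0 (2*R)) c * ennreal (wB c M x) \<partial>lborel)"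
    by (intro nn_integral_mono pt)
  finally show ?thesis .
qed

lemma averaging:
  assumes M: "M > 0" and RM: "M \<le> R" and F[measurable]: "F \<in> borel_measurable lborel" and B: "B \<ge> 0"
    and bnd: "\<And>c. (\<integral>\<^sup>+x. ennreal (cmod (F x) powr p * wB c M x) \<partial>lborel) \<le> ennreal B"
  shows "(\<integral>\<^sup>+x. indicator (ball x0 R) x * ennreal (cmod (F x) powr p) \<partial>lborel) \<le> ennreal (2^100 * 32 * R^5 * B / M^5)"
proof -
  define V where "V = unit_ball_vol 5"
  have V: "V > 0" unfolding V_def by (rule unit_ball_vol_pos)
  define k0 where "k0 = V * M^5 / 2^100"
  have k0: "k0 > 0" unfolding k0_def using V M by simp
  have R0: "R > 0" using M RM by simp
  define f where "f x c = ennreal (cmod (F x) powr p) * (indicator (ball x0 (2*R)) c * ennreal (wB c M x))" for x c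
  have dm: "(\<lambda>z::(real^5) \<times> (real^5). dist (fst z) (snd z)) \<in> borel_measurable (lborel \<Otimes>\<^sub>M lborel)"
    unfolding lborel_prod measurable_lborel2 by (intro borel_measurable_continuous_onI continuous_intros)
  have pm: "(\<lambda>t::real. ennreal ((1 + t / M) powr - 100)) \<in> borel_measurable borel" by measurable
  have m3: "(\<lambda>z::(real^5) \<times> (real^5). ennreal (wB (snd z) M (fst z))) \<in> borel_measurable (lborel \<Otimes>\<^sub>M lborel)"
    unfolding wB_def using measurable_compose[OF dm pm] by (simp add: comp_def)
  have m2: "(\<lambda>z::(real^5) \<times> (real^5). indicator (ball x0 (2*R)) (snd z) :: ennreal) \<in> borel_measurable (lborel \<Otimes>\<^sub>M lborel)"
    using measurable_compose[OF measurable_snd borel_measurable_indicator[of "ball x0 (2*R)" lborel]] by (simp add: comp_def)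
  have m1: "(\<lambda>z::(real^5) \<times> (real^5). ennreal (cmod (F (fst z)) powr p)) \<in> borel_measurable (lborel \<Otimes>\<^sub>M lborel)"
    by measurable
  have Fm: "(\<lambda>x. ennreal (cmod (F x) powr p)) \<in> borel_measurable lborel" by measurable
  have ib: "(\<lambda>x. indicator (ball x0 R) x :: ennreal) \<in> borel_measurable lborel"
    by (intro borel_measurable_indicator) simp
  have fm: "case_prod f \<in> borel_measurable (lborel \<Otimes>\<^sub>M lborel)"
    unfolding f_def using m1 m2 m3 by (simp add: case_prod_beta)
  have "ennreal k0 * (\<integral>\<^sup>+x. indicator (ball x0 R) x * ennreal (cmod (F x) powr p) \<partial>lborel)
      = (\<integral>\<^sup>+x. ennreal k0 * (indicator (ball x0 R) x * ennreal (cmod (F x) powr p)) \<partial>lborel)"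
    by (rule nn_integral_cmult[symmetric]) (intro borel_measurable_times_ennreal ib Fm)
  also have "\<dots> \<le> (\<integral>\<^sup>+x. ennreal (cmod (F x) powr p) * (\<integral>\<^sup>+c. indicator (ball x0 (2*R)) c * ennreal (wB c M x) \<partial>lborel) \<partial>lborel)"
  proof (intro nn_integral_mono)
    fix x
    show "ennreal k0 * (indicator (ball x0 R) x * ennreal (cmod (F x) powr p)) \<le> ennreal (cmod (F x) powr p) * (\<integral>\<^sup>+c. indicator (ball x0 (2*R)) c * ennreal (wB c M x) \<partial>lborel)"
    proof (cases "x \<in> ball x0 R")
      case True
      have "ennreal k0 \<le> (\<integral>\<^sup>+c. indicator (ball x0 (2*R)) c * ennreal (wB c M x) \<partial>lborel)"
        using lower_w[OF M RM True] unfolding k0_def V_def .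
      then have "ennreal k0 * ennreal (cmod (F x) powr p) \<le> (\<integral>\<^sup>+c. indicator (ball x0 (2*R)) c * ennreal (wB c M x) \<partial>lborel) * ennreal (cmod (F x) powr p)"
        by (rule mult_right_mono) simp
      then show ?thesis using True by (simp add: mult.commute)
    qed simp
  qed
  also have "\<dots> = (\<integral>\<^sup>+x. (\<integral>\<^sup>+c. f x c \<partial>lborel) \<partial>lborel)"
    unfolding f_def by (intro nn_integral_cong nn_integral_cmult[symmetric]) measurable
  also have "\<dots> = (\<integral>\<^sup>+c. (\<integral>\<^sup>+x. f x c \<partial>lborel) \<partial>lborel)"
    by (rule lborel_pair.Fubini'[OF fm, symmetric])
  also have "\<dots> = (\<integral>\<^sup>+c. indicator (ball x0 (2*R)) c * (\<integral>\<^sup>+x. ennreal (cmod (F x) powr p * wB c M x) \<partial>lborel) \<partial>lborel)"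
  proof (intro nn_integral_cong)
    fix c
    have "(\<integral>\<^sup>+x. f x c \<partial>lborel) = (\<integral>\<^sup>+x. indicator (ball x0 (2*R)) c * ennreal (cmod (F x) powr p * wB c M x) \<partial>lborel)"
      unfolding f_def by (intro nn_integral_cong) (simp add: ennreal_mult wB_nonneg mult_ac)
    also have "\<dots> = indicator (ball x0 (2*R)) c * (\<integral>\<^sup>+x. ennreal (cmod (F x) powr p * wB c M x) \<partial>lborel)"
      by (rule nn_integral_cmult) measurable
    finally show "(\<integral>\<^sup>+x. f x c \<partial>lborel) = indicator (ball x0 (2*R)) c * (\<integral>\<^sup>+x. ennreal (cmod (F x) powr p * wB c M x) \<partial>lborel)" .
  qed
  also have "\<dots> \<le> (\<integral>\<^sup>+c. indicator (ball x0 (2*R)) c * ennreal B \<partial>lborel)"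
    by (intro nn_integral_mono mult_left_mono bnd) auto
  also have "\<dots> = ennreal (V * (2*R)^5 * B)"
    unfolding V_def using B R0 by (intro ball_int) auto
  finally have main: "ennreal k0 * (\<integral>\<^sup>+x. indicator (ball x0 R) x * ennreal (cmod (F x) powr p) \<partial>lborel) \<le> ennreal (V * (2*R)^5 * B)" .
  define L where "L = (\<integral>\<^sup>+x. indicator (ball x0 R) x * ennreal (cmod (F x) powr p) \<partial>lborel)"
  have "L = ennreal (1/k0) * (ennreal k0 * L)"
    using k0 by (simp add: ennreal_mult[symmetric] mult.assoc[symmetric])
  also have "\<dots> \<le> ennreal (1/k0) * ennreal (V * (2*R)^5 * B)"
    using main unfolding L_def by (intro mult_left_mono) auto
  also have "\<dots> = ennreal (V * (2*R)^5 * B / k0)"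
    using k0 V B R0 by (simp add: ennreal_mult[symmetric])
  also have "V * (2*R)^5 * B / k0 = 2^100 * 32 * R^5 * B / M^5"
    unfolding k0_def using V M by (simp add: field_simps)
  finally show ?thesis unfolding L_def .
qed




definition Qs :: "real \<Rightarrow> real \<Rightarrow> real \<Rightarrow> (real \<times> real) set" where
  "Qs \<delta> u v = {u - \<delta> .. u} \<times> {v - \<delta> .. v}"

lemma Qs_sets: "Qs \<delta> u v \<in> sets lborel"
  unfolding Qs_def sets_lborel by (intro borel_closed closed_Times) auto

lemma emeasure_Qs: "\<delta> \<ge> 0 \<Longrightarrow> emeasure lborel (Qs \<delta> u v) = ennreal (\<delta>^2)"
  unfolding Qs_def lborel_prod[symmetric]
  by (subst lborel.emeasure_pair_measure_Times) (auto simp: ennreal_mult[symmetric] power2_eq_square)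

lemma measure_Qs: "\<delta> \<ge> 0 \<Longrightarrow> measure lborel (Qs \<delta> u v) = \<delta>^2"
  unfolding measure_def using emeasure_Qs by simp

lemma Qs_fin: "\<delta> \<ge> 0 \<Longrightarrow> emeasure lborel (Qs \<delta> u v) < \<infinity>"
  using emeasure_Qs by simp

lemma NB:
  fixes f :: "real \<times> real \<Rightarrow> complex"
  assumes Q: "Q \<in> sets lborel" "emeasure lborel Q < \<infinity>" and f: "f \<in> borel_measurable lborel"
    and B: "\<And>y. y \<in> Q \<Longrightarrow> norm (f y) \<le> B" and B0: "B \<ge> 0"
  shows "norm (LINT y|lborel. indicator Q y *\<^sub>R f y) \<le> measure lborel Q * B"
proof -
  have "norm (LINT y|lborel. indicator Q y *\<^sub>R f y) \<le> (LINT y|lborel. norm (indicator Q y *\<^sub>R f y))"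
    by (rule integral_norm_bound)
  also have "\<dots> \<le> (LINT y|lborel. indicator Q y * B)"
  proof (rule integral_mono')
    show "integrable lborel (\<lambda>y. indicator Q y * B)" using Q by simp
    fix y show "norm (indicator Q y *\<^sub>R f y) \<le> indicator Q y * B" using B by (auto simp: indicator_def)
    show "0 \<le> indicator Q y * B" using B0 by simp
  qed
  also have "\<dots> = measure lborel Q * B" using Q by simp
  finally show ?thesis .
qed

lemma aux_cancel: "\<delta> \<noteq> 0 \<Longrightarrow> I2 = I1 - of_real(\<delta>^2) * hp \<Longrightarrow> of_real (1/\<delta>^2) * I1 - hp = of_real(1/\<delta>^2) * (I2::complex)"
proof -
  assume d: "\<delta> \<noteq> 0" and e: "I2 = I1 - of_real(\<delta>^2) * hp"
  have one: "of_real (1/\<delta>^2) * (of_real(\<delta>^2) :: complex) = 1" using d by (simp flip: of_real_mult)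
  from e have "I1 = I2 + of_real(\<delta>^2)*hp" by simp
  then have "of_real (1/\<delta>^2) * I1 = of_real (1/\<delta>^2) * I2 + (of_real (1/\<delta>^2) * of_real(\<delta>^2))*hp"
    by (simp only: distrib_left mult.assoc)
  then show ?thesis unfolding one by simp
qed

definition avg :: "real \<Rightarrow> real \<Rightarrow> real \<Rightarrow> real^5 \<Rightarrow> complex" where
  "avg \<delta> u v x = of_real (1 / \<delta>^2) * (LINT y|lborel. indicator (Qs \<delta> u v) y *\<^sub>R ee (phase x (fst y) (snd y)))"

lemma avg_bound: "\<delta> > 0 \<Longrightarrow> cmod (avg \<delta> u v x) \<le> 1"
proof -
  assume d: "\<delta> > 0"
  have "norm (LINT y|lborel. indicator (Qs \<delta> u v) y *\<^sub>R ee (phase x (fst y) (snd y))) \<le> measure lborel (Qs \<delta> u v) * 1"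
    using d by (intro NB Qs_sets Qs_fin meas_ee_x) auto
  then show ?thesis using d unfolding avg_def by (simp add: norm_mult norm_divide norm_power measure_Qs divide_le_eq_1)
qed

lemma avg_lim:
  assumes d: "d > 0"
  shows "(\<lambda>n. avg (d / Suc n) u v x) \<longlonglongrightarrow> ee (phase x u v)"
proof (rule LIMSEQ_I)
  fix \<epsilon> :: real assume e: "\<epsilon> > 0"
  define h where "h y = ee (phase x (fst y) (snd y))" for y :: "real \<times> real"
  have hc: "continuous_on UNIV h" unfolding h_def ee_def phase_def by (intro continuous_intros)
  have "isCont h (u, v)" using hc by (simp add: continuous_on_eq_continuous_at)
  then obtain \<eta> where eta: "\<eta> > 0" and he: "\<And>y. dist y (u,v) < \<eta> \<Longrightarrow> dist (h y) (h (u,v)) < \<epsilon> / 2"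
    using e unfolding continuous_at_eps_delta by (metis half_gt_zero)
  obtain n0 :: nat where n0: "2 * d / \<eta> < n0" using reals_Archimedean2 by blast
  show "\<exists>no. \<forall>n\<ge>no. norm (avg (d / Suc n) u v x - ee (phase x u v)) < \<epsilon>"
  proof (intro exI allI impI)
    fix n assume n: "n0 \<le> n"
    define \<delta> where "\<delta> = d / Suc n"
    have dp: "\<delta> > 0" unfolding \<delta>_def using d by simp
    have "2 * d < \<eta> * Suc n"
    proof -
      have "2 * d / \<eta> < Suc n" using n0 n by simp
      then show ?thesis using eta by (simp add: divide_less_eq mult.commute)
    qed
    then have dl: "2 * \<delta> < \<eta>" unfolding \<delta>_def by (simp add: divide_less_eq)
    define Q where "Q = Qs \<delta> u v"
    have hm: "h \<in> borel_measurable lborel" unfolding h_def by (rule meas_ee_x)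
    have si: "set_integrable lborel (Qs \<delta> u v) (\<lambda>_. 1::complex)"
      unfolding set_integrable_def using Qs_sets Qs_fin[OF less_imp_le[OF dp]]
      by (intro integrable_scaleR_left integrable_real_indicator) auto
    have int1: "integrable lborel (\<lambda>y. indicator Q y *\<^sub>R h y)"
      using int_sub[OF si Qs_sets order_refl] unfolding Q_def h_def by simp
    have "avg \<delta> u v x - h (u,v) = of_real (1/\<delta>^2) * (LINT y|lborel. indicator Q y *\<^sub>R (h y - h (u,v)))"
    proof -
      have "(LINT y|lborel. indicator Q y *\<^sub>R (h y - h (u,v))) = (LINT y|lborel. indicator Q y *\<^sub>R h y) - (LINT y|lborel. indicator Q y *\<^sub>R h (u,v))"
        using int1 Qs_fin[OF less_imp_le[OF dp]] Qs_sets unfolding Q_def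
        by (simp add: scaleR_diff_right)
      also have "(LINT y|lborel. indicator Q y *\<^sub>R h (u,v)) = of_real (\<delta>^2) * h (u,v)"
        using Qs_fin[OF less_imp_le[OF dp]] Qs_sets measure_Qs[OF less_imp_le[OF dp]] unfolding Q_def
        by (simp add: scaleR_conv_of_real)
      finally have "(LINT y|lborel. indicator Q y *\<^sub>R (h y - h (u,v))) = (LINT y|lborel. indicator Q y *\<^sub>R h y) - of_real (\<delta>^2) * h (u,v)" .
      then show ?thesis using dp aux_cancel[of \<delta>] unfolding avg_def Q_def h_def by blast
    qed
    moreover have "norm (LINT y|lborel. indicator Q y *\<^sub>R (h y - h (u,v))) \<le> measure lborel Q * (\<epsilon>/2)"
    proof (rule NB)
      show "Q \<in> sets lborel" "emeasure lborel Q < \<infinity>" unfolding Q_def using Qs_sets Qs_fin dp by auto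
      show "(\<lambda>y. h y - h (u, v)) \<in> borel_measurable lborel" using hm by measurable
      show "0 \<le> \<epsilon> / 2" using e by simp
      fix y assume y: "y \<in> Q"
      have "dist y (u,v) \<le> \<bar>fst y - u\<bar> + \<bar>snd y - v\<bar>"
        by (cases y) (simp add: dist_Pair_Pair dist_real_def sqrt_sum_squares_le_sum_abs)
      also have "\<dots> \<le> 2 * \<delta>" using y unfolding Q_def Qs_def by (cases y) auto
      finally have "dist y (u,v) < \<eta>" using dl by simp
      then show "norm (h y - h (u, v)) \<le> \<epsilon> / 2" using he[of y] by (simp add: dist_norm)
    qed
    ultimately have "norm (avg \<delta> u v x - h (u,v)) \<le> (1/\<delta>^2) * (measure lborel Q * (\<epsilon>/2))"
    proof -
      assume a1: "avg \<delta> u v x - h (u,v) = of_real (1/\<delta>^2) * (LINT y|lborel. indicator Q y *\<^sub>R (h y - h (u,v)))"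
        and a2: "norm (LINT y|lborel. indicator Q y *\<^sub>R (h y - h (u,v))) \<le> measure lborel Q * (\<epsilon>/2)"
      have "norm (avg \<delta> u v x - h (u,v)) = (1/\<delta>^2) * norm (LINT y|lborel. indicator Q y *\<^sub>R (h y - h (u,v)))"
        unfolding a1 norm_mult norm_of_real using dp by simp
      also have "\<dots> \<le> (1/\<delta>^2) * (measure lborel Q * (\<epsilon>/2))"
        using a2 dp by (intro mult_left_mono) auto
      finally show ?thesis .
    qed
    also have "\<dots> = \<epsilon>/2" unfolding Q_def using dp by (simp add: measure_Qs)
    finally show "norm (avg (d / Suc n) u v x - ee (phase x u v)) < \<epsilon>"
      unfolding \<delta>_def h_def using e by simp
  qed
qed




definition gfun :: "nat \<Rightarrow> (nat \<Rightarrow> nat \<Rightarrow> complex) \<Rightarrow> (nat \<Rightarrow> real) \<Rightarrow> (nat \<Rightarrow> real) \<Rightarrow> real \<Rightarrow> real \<times> real \<Rightarrow> complex" where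
  "gfun N a s t \<delta> y = (\<Sum>i=1..N. \<Sum>j=1..N. indicator (Qs \<delta> (s i) (t j)) y *\<^sub>R (a i j / of_real (\<delta>^2)))"

definition good :: "nat \<Rightarrow> (nat \<Rightarrow> real) \<Rightarrow> (nat \<Rightarrow> real) \<Rightarrow> real \<Rightarrow> bool" where
  "good N s t \<delta> \<longleftrightarrow> \<delta> > 0 \<and> (\<forall>i\<in>{1..N}. (real i - 1) / N \<le> s i - \<delta> \<and> s i \<le> real i / N
       \<and> (real i - 1) / N \<le> t i - \<delta> \<and> t i \<le> real i / N)"

lemma gfun_int:
  assumes S: "S \<in> sets lborel" and d: "\<delta> > 0"
  shows "set_integrable lborel S (gfun N a s t \<delta>)"
proof -
  have eq: "(\<lambda>y. indicator S y *\<^sub>R gfun N a s t \<delta> y) = (\<lambda>y. \<Sum>i=1..N. \<Sum>j=1..N. indicator (S \<inter> Qs \<delta> (s i) (t j)) y *\<^sub>R (a i j / of_real (\<delta>^2)))"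
    unfolding gfun_def by (simp only: scaleR_sum_right scaleR_scaleR indicator_inter_arith)
  have "integrable lborel (\<lambda>y. indicator (S \<inter> Qs \<delta> (s i) (t j)) y *\<^sub>R (a i j / of_real (\<delta>^2)))" for i j
  proof (intro integrable_scaleR_left integrable_real_indicator)
    show "S \<inter> Qs \<delta> (s i) (t j) \<in> sets lborel" using S Qs_sets by auto
    have "emeasure lborel (S \<inter> Qs \<delta> (s i) (t j)) \<le> emeasure lborel (Qs \<delta> (s i) (t j))"
      by (intro emeasure_mono Qs_sets) auto
    then show "emeasure lborel (S \<inter> Qs \<delta> (s i) (t j)) < \<infinity>" using Qs_fin[of \<delta>] d by (auto simp: le_less_trans)
  qed
  then show ?thesis unfolding set_integrable_def eq by (intro Bochner_Integration.integrable_sum)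
qed

lemma good_sub: "good N s t \<delta> \<Longrightarrow> i \<in> {1..N} \<Longrightarrow> j \<in> {1..N} \<Longrightarrow> Qs \<delta> (s i) (t j) \<subseteq> unit_sq"
proof -
  assume g: "good N s t \<delta>" and i: "i \<in> {1..N}" and j: "j \<in> {1..N}"
  have N: "real N > 0" using i by auto
  have a: "0 \<le> (real i - 1) / N" "real i / N \<le> 1" "0 \<le> (real j - 1) / N" "real j / N \<le> 1"
    using i j N by (auto simp: divide_le_eq_1)
  have si: "(real i - 1) / N \<le> s i - \<delta>" "s i \<le> real i / N" using g i unfolding good_def by auto
  have tj: "(real j - 1) / N \<le> t j - \<delta>" "t j \<le> real j / N" using g j unfolding good_def by auto
  show ?thesis unfolding Qs_def unit_sq_def
  proof (intro Sigma_mono subsetI)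
    fix u assume "u \<in> {s i - \<delta>..s i}" then show "u \<in> {0..1}" using si a by auto
  next
    fix u assume "u \<in> {t j - \<delta>..t j}" then show "u \<in> {0..1}" using tj a by auto
  qed
qed

lemma ext_gfun:
  assumes g: "good N s t \<delta>"
  shows "ext_op unit_sq (gfun N a s t \<delta>) x = (\<Sum>i=1..N. \<Sum>j=1..N. a i j * avg \<delta> (s i) (t j) x)"
proof -
  have d: "\<delta> > 0" using g unfolding good_def by simp
  define e where "e y = ee (phase x (fst y) (snd y))" for y
  define Q where "Q i j = Qs \<delta> (s i) (t j)" for i j
  define c where "c i j = a i j / of_real (\<delta>^2)" for i j
  have si: "set_integrable lborel (Q i j) (\<lambda>_. 1::complex)" for i j
    unfolding set_integrable_def Q_def using Qs_sets Qs_fin[of \<delta>] d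
    by (intro integrable_scaleR_left integrable_real_indicator) auto
  have ie: "integrable lborel (\<lambda>y. indicator (Q i j) y *\<^sub>R e y)" for i j
    using int_sub[OF si[of i j] _ order_refl] Qs_sets unfolding Q_def e_def by simp
  have pt: "indicator unit_sq y *\<^sub>R (gfun N a s t \<delta> y * e y) = (\<Sum>i=1..N. \<Sum>j=1..N. c i j * (indicator (Q i j) y *\<^sub>R e y))" for y
  proof -
    have "indicator unit_sq y *\<^sub>R (gfun N a s t \<delta> y * e y) = (\<Sum>i=1..N. \<Sum>j=1..N. indicator unit_sq y *\<^sub>R (indicator (Q i j) y *\<^sub>R c i j * e y))"
      unfolding gfun_def Q_def c_def by (simp only: sum_distrib_right scaleR_sum_right)
    also have "\<dots> = (\<Sum>i=1..N. \<Sum>j=1..N. c i j * (indicator (Q i j) y *\<^sub>R e y))"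
    proof (intro sum.cong refl)
      fix i j assume i: "i \<in> {1..N}" and j: "j \<in> {1..N}"
      have "Q i j \<subseteq> unit_sq" unfolding Q_def by (rule good_sub[OF g i j])
      then show "indicator unit_sq y *\<^sub>R (indicator (Q i j) y *\<^sub>R c i j * e y) = c i j * (indicator (Q i j) y *\<^sub>R e y)"
        by (auto simp: indicator_def)
    qed
    finally show ?thesis .
  qed
  have "ext_op unit_sq (gfun N a s t \<delta>) x = (LINT y|lborel. (\<Sum>i=1..N. \<Sum>j=1..N. c i j * (indicator (Q i j) y *\<^sub>R e y)))"
    unfolding ext_op_def set_lebesgue_integral_def e_def[symmetric] pt ..
  also have "\<dots> = (\<Sum>i=1..N. LINT y|lborel. (\<Sum>j=1..N. c i j * (indicator (Q i j) y *\<^sub>R e y)))"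
    by (intro Bochner_Integration.integral_sum Bochner_Integration.integrable_sum integrable_mult_right ie)
  also have "\<dots> = (\<Sum>i=1..N. \<Sum>j=1..N. LINT y|lborel. c i j * (indicator (Q i j) y *\<^sub>R e y))"
    by (intro sum.cong refl Bochner_Integration.integral_sum integrable_mult_right ie)
  also have "\<dots> = (\<Sum>i=1..N. \<Sum>j=1..N. c i j * (LINT y|lborel. indicator (Q i j) y *\<^sub>R e y))"
    by (simp only: integral_mult_right_zero)
  also have "\<dots> = (\<Sum>i=1..N. \<Sum>j=1..N. a i j * avg \<delta> (s i) (t j) x)"
    unfolding c_def avg_def Q_def e_def by (simp add: field_simps)
  finally show ?thesis .
qed

lemma sum_delta2:
  assumes "finite A" "finite B"
  shows "(\<Sum>i\<in>A. \<Sum>j\<in>B. if i = p then (if j = q then X else 0) else (0::'a::comm_monoid_add)) = (if p \<in> A \<and> q \<in> B then X else 0)"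
proof -
  have "(\<Sum>j\<in>B. if i = p then (if j = q then X else 0) else (0::'a)) = (if i = p then (if q \<in> B then X else 0) else 0)" for i
    using assms by (cases "i = p") (simp_all add: sum.delta)
  then show ?thesis using assms by (simp add: sum.delta)
qed

lemma idx:
  assumes N: "real N > 0" and a: "(real i - 1) / N \<le> u" "u \<le> real i / N" "real k / N < u" "u < real (k+1) / N"
  shows "i = k + 1"
proof -
  have b: "real i - 1 \<le> u * N" "u * N \<le> real i" "real k < u * N" "u * N < real k + 1"
    using a N by (auto simp: field_simps)
  then have "real k < real i" "real i < real k + 2" by linarith+
  then have "k < i" "i < k + 2" by linarith+
  then show ?thesis by simp
qed

lemma grid_bound:
  assumes g: "good N s t \<delta>" and k: "k < N" and l: "l < N"
  shows "cmod (ext_op (grid_sq ((real N)^2) k l) (gfun N a s t \<delta>) x) \<le> cmod (a (k+1) (l+1))"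
proof -
  have d: "\<delta> > 0" using g unfolding good_def by simp
  have N: "N \<ge> 1" using k by simp
  have Np: "real N > 0" using N by simp
  define G where "G = grid_sq ((real N)^2) k l"
  define Q where "Q i j = Qs \<delta> (s i) (t j)" for i j
  define c where "c i j = a i j / of_real (\<delta>^2)" for i j
  define E where "E = (\<lambda>k. real k / real N) ` {..N}"
  have si: "set_integrable lborel G (gfun N a s t \<delta>)" unfolding G_def by (rule gfun_int[OF grid_sq_sets d])
  have cn: "cmod (c (k+1) (l+1)) = cmod (a (k+1) (l+1)) / \<delta>^2"
    unfolding c_def by (simp add: norm_divide norm_power)
  have "cmod (ext_op G (gfun N a s t \<delta>) x) \<le> (LINT y|lborel. norm (indicator G y *\<^sub>R gfun N a s t \<delta> y))"
    by (rule ext_op_bound[OF si])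
  also have "\<dots> \<le> (LINT y|lborel. indicator (Q (k+1) (l+1)) y * (cmod (a (k+1) (l+1)) / \<delta>^2))"
  proof (rule integral_mono_AE')
    show "integrable lborel (\<lambda>y. indicator (Q (k+1) (l+1)) y * (cmod (a (k+1) (l+1)) / \<delta>^2))"
      unfolding Q_def using Qs_sets Qs_fin[of \<delta>] d by (intro integrable_mult_left integrable_real_indicator) auto
    show "AE y in lborel. 0 \<le> indicator (Q (k+1) (l+1)) y * (cmod (a (k+1) (l+1)) / \<delta>^2)" by simp
    have fin: "finite E" unfolding E_def by simp
    show "AE y in lborel. norm (indicator G y *\<^sub>R gfun N a s t \<delta> y) \<le> indicator (Q (k+1) (l+1)) y * (cmod (a (k+1) (l+1)) / \<delta>^2)"
      using AE_grid[OF fin]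
    proof (rule AE_mp, intro AE_I2 impI)
      fix y :: "real \<times> real"
      assume yE: "fst y \<notin> E \<and> snd y \<notin> E"
      show "norm (indicator G y *\<^sub>R gfun N a s t \<delta> y) \<le> indicator (Q (k+1) (l+1)) y * (cmod (a (k+1) (l+1)) / \<delta>^2)"
      proof (cases "y \<in> G")
        case False then show ?thesis by simp
      next
        case True
        have kE: "real k / real N \<in> E" "real (k+1) / real N \<in> E" "real l / real N \<in> E" "real (l+1) / real N \<in> E"
          unfolding E_def using k l by (auto intro!: image_eqI simp del: of_nat_add of_nat_Suc)
        have yG: "real k / N \<le> fst y" "fst y \<le> real (k+1) / N" "real l / N \<le> snd y" "snd y \<le> real (l+1) / N"
          using True unfolding G_def grid_sq_def by auto
        have ys: "real k / N < fst y" "fst y < real (k+1) / N" "real l / N < snd y" "snd y < real (l+1) / N"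
          using yG yE kE by (metis order_le_less)+
        have claim: "i = k+1 \<and> j = l+1" if i: "i \<in> {1..N}" and j: "j \<in> {1..N}" and yQ: "y \<in> Q i j" for i j
        proof
          have "(real i - 1) / N \<le> s i - \<delta>" "s i \<le> real i / N" using g i unfolding good_def by auto
          moreover have "s i - \<delta> \<le> fst y" "fst y \<le> s i" using yQ unfolding Q_def Qs_def by auto
          ultimately show "i = k+1" using ys by (intro idx[OF Np]) auto
          have "(real j - 1) / N \<le> t j - \<delta>" "t j \<le> real j / N" using g j unfolding good_def by auto
          moreover have "t j - \<delta> \<le> snd y" "snd y \<le> t j" using yQ unfolding Q_def Qs_def by auto
          ultimately show "j = l+1" using ys by (intro idx[OF Np]) auto
        qed
        have trm: "indicator (Q i j) y *\<^sub>R c i j = (if i = k+1 then (if j = l+1 then indicator (Q (k+1) (l+1)) y *\<^sub>R c (k+1) (l+1) else 0) else 0)"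
          if i: "i \<in> {1..N}" and j: "j \<in> {1..N}" for i j
        proof (cases "y \<in> Q i j")
          case True then show ?thesis using claim[OF i j] by simp
        next
          case False then show ?thesis by auto
        qed
        have "gfun N a s t \<delta> y = (\<Sum>i=1..N. \<Sum>j=1..N. indicator (Q i j) y *\<^sub>R c i j)"
          unfolding gfun_def Q_def c_def ..
        also have "\<dots> = (\<Sum>i=1..N. \<Sum>j=1..N. (if i = k+1 then (if j = l+1 then indicator (Q (k+1) (l+1)) y *\<^sub>R c (k+1) (l+1) else 0) else 0))"
          by (intro sum.cong refl trm) auto
        also have "\<dots> = indicator (Q (k+1) (l+1)) y *\<^sub>R c (k+1) (l+1)"
          using k l by (subst sum_delta2) auto
        finally have gy: "gfun N a s t \<delta> y = indicator (Q (k+1) (l+1)) y *\<^sub>R c (k+1) (l+1)" .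
        show ?thesis unfolding gy using True cn by (simp add: indicator_def)
      qed
    qed
  qed
  also have "\<dots> = cmod (a (k+1) (l+1))"
    unfolding Q_def using d Qs_sets Qs_fin[of \<delta>] by (simp add: measure_Qs)
  finally show ?thesis unfolding G_def .
qed




lemma reindex2: "(\<Sum>kl\<in>{..<N}\<times>{..<N}. f (fst kl + 1) (snd kl + 1)) = (\<Sum>i=1..N. \<Sum>j=1..N. f i j :: real)"
  for N :: nat
proof -
  have e: "{1..N} = {Suc 0..N}" by simp
  have "(\<Sum>kl\<in>{..<N}\<times>{..<N}. f (fst kl + 1) (snd kl + 1)) = (\<Sum>k<N. \<Sum>l<N. f (Suc k) (Suc l))"
    by (simp add: sum.cartesian_product case_prod_beta)
  also have "\<dots> = (\<Sum>i=1..N. \<Sum>j=1..N. f i j)"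
    unfolding e by (simp only: sum.atLeast1_atMost_eq)
  finally show ?thesis .
qed

lemma per_c_bound:
  assumes g: "good N s t \<delta>" and N: "N \<ge> 1" and p: "p > 0"
  defines "M \<equiv> (real N)^2"
  shows "(\<integral>\<^sup>+x. ennreal (cmod (ext_op unit_sq (gfun N a s t \<delta>) x) powr p * wB c M x) \<partial>lborel)
    \<le> ennreal (Dec M p powr p * (\<Sum>i=1..N. \<Sum>j=1..N. cmod (a i j) powr p) * (64 * unit_ball_vol 5 * M^5))"
proof -
  have d: "\<delta> > 0" using g unfolding good_def by simp
  have Mp: "M > 0" unfolding M_def using N by simp
  define F where "F = ext_op unit_sq (gfun N a s t \<delta>)"
  define W where "W = 64 * unit_ball_vol 5 * M^5"
  define D where "D = Dec M p"
  define A where "A = (\<Sum>i=1..N. \<Sum>j=1..N. cmod (a i j) powr p)"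
  define E where "E kl = ext_op (grid_sq M (fst kl) (snd kl)) (gfun N a s t \<delta>)" for kl
  have gi: "set_integrable lborel unit_sq (gfun N a s t \<delta>)" by (rule gfun_int[OF unit_sq_sets d])
  have D0: "D \<ge> 0" unfolding D_def M_def by (rule Dec_prop(2)[OF N p gi])
  have intF: "integrable lborel (\<lambda>x. cmod (F x) powr p * wB c M x)"
    unfolding F_def using gi Mp p by (intro ext_integrable) auto
  have gn: "grid_n M = N" unfolding M_def by (rule grid_nN)
  define S where "S = (\<Sum>kl \<in> {..<N} \<times> {..<N}. Lp_w p c M (E kl) powr p)"
  have S0: "S \<ge> 0" unfolding S_def by (intro sum_nonneg) simp
  have LF: "Lp_w p c M F \<le> D * S powr (1/p)"
    using Dec_prop(1)[OF N p gi, of c] unfolding F_def D_def S_def E_def M_def[symmetric] gn .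
  have "Lp_w p c M F powr p \<le> (D * S powr (1/p)) powr p"
    using LF p by (intro powr_mono2) (auto simp: Lp_w_nonneg)
  also have "\<dots> = D powr p * S"
    using D0 S0 p by (simp add: powr_mult powr_powr)
  finally have L1: "(LINT x|lborel. cmod (F x) powr p * wB c M x) \<le> D powr p * S"
    using Lp_w_pow[OF p] by simp
  have Ekl: "Lp_w p c M (E (k,l)) powr p \<le> cmod (a (k+1) (l+1)) powr p * W" if k: "k < N" and l: "l < N" for k l
  proof -
    have "Lp_w p c M (E (k,l)) powr p = (LINT x|lborel. cmod (E (k,l) x) powr p * wB c M x)"
      by (rule Lp_w_pow[OF p])
    also have "\<dots> \<le> (LINT x|lborel. cmod (a (k+1) (l+1)) powr p * wB c M x)"
    proof (rule integral_mono')
      show "integrable lborel (\<lambda>x. cmod (a (k+1) (l+1)) powr p * wB c M x)"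
        using wB_integrable[OF Mp] by simp
      fix x
      have "cmod (E (k,l) x) \<le> cmod (a (k+1) (l+1))"
        unfolding E_def M_def using grid_bound[OF g k l] by simp
      then have "cmod (E (k,l) x) powr p \<le> cmod (a (k+1) (l+1)) powr p"
        using p by (intro powr_mono2) auto
      then show "cmod (E (k,l) x) powr p * wB c M x \<le> cmod (a (k+1) (l+1)) powr p * wB c M x"
        by (intro mult_right_mono) (auto simp: wB_nonneg)
      show "0 \<le> cmod (a (k+1) (l+1)) powr p * wB c M x" by (simp add: wB_nonneg)
    qed
    also have "\<dots> = cmod (a (k+1) (l+1)) powr p * (LINT x|lborel. wB c M x)" by simp
    also have "\<dots> \<le> cmod (a (k+1) (l+1)) powr p * W"
      unfolding W_def using wB_integral_le[OF Mp] by (intro mult_left_mono) auto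
    finally show ?thesis .
  qed
  have "S \<le> (\<Sum>kl \<in> {..<N} \<times> {..<N}. cmod (a (fst kl + 1) (snd kl + 1)) powr p * W)"
    unfolding S_def using Ekl by (intro sum_mono) auto
  also have "\<dots> = A * W" unfolding A_def sum_distrib_right by (rule reindex2)
  finally have S1: "S \<le> A * W" .
  have "(LINT x|lborel. cmod (F x) powr p * wB c M x) \<le> D powr p * (A * W)"
    using L1 S1 by (meson order_trans mult_left_mono powr_ge_zero)
  then have "ennreal (LINT x|lborel. cmod (F x) powr p * wB c M x) \<le> ennreal (D powr p * A * W)"
    by (simp add: ennreal_leI mult.assoc)
  moreover have "ennreal (LINT x|lborel. cmod (F x) powr p * wB c M x) = (\<integral>\<^sup>+x. ennreal (cmod (F x) powr p * wB c M x) \<partial>lborel)"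
    by (rule nn_integral_eq_integral[symmetric]) (auto simp: intF wB_nonneg)
  ultimately show ?thesis unfolding F_def D_def A_def W_def by simp
qed




lemma exists_d:
  assumes N: "N \<ge> 1"
    and st: "\<forall>i\<in>{1..N}. s i \<in> {(real i - 1) / real N <.. real i / real N} \<and> t i \<in> {(real i - 1) / real N <.. real i / real N}"
  shows "\<exists>d>0. \<forall>n. good N s t (d / Suc n)"
proof -
  define m where "m i = min (s i - (real i - 1)/N) (t i - (real i - 1)/N)" for i
  define d where "d = Min (m ` {1..N})"
  have ne: "m ` {1..N} \<noteq> {}" using N by auto
  have "d \<in> m ` {1..N}" unfolding d_def using ne by (intro Min_in) auto
  then obtain i0 where i0: "i0 \<in> {1..N}" "d = m i0" by auto
  have dpos: "d > 0" using st i0 unfolding m_def by auto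
  have dle: "d \<le> m i" if "i \<in> {1..N}" for i unfolding d_def using that by (intro Min_le) auto
  show ?thesis
  proof (intro exI conjI allI)
    show "d > 0" by (rule dpos)
    fix n :: nat
    have dn: "d / Suc n \<le> d" "d / Suc n > 0" using dpos by (auto simp: divide_le_eq)
    show "good N s t (d / Suc n)" unfolding good_def
    proof (intro conjI ballI)
      show "d / Suc n > 0" by (rule dn(2))
      fix i assume i: "i \<in> {1..N}"
      show "(real i - 1) / N \<le> s i - d / Suc n" using dle[OF i] dn unfolding m_def by auto
      show "s i \<le> real i / N" using st i by auto
      show "(real i - 1) / N \<le> t i - d / Suc n" using dle[OF i] dn unfolding m_def by auto
      show "t i \<le> real i / N" using st i by auto
    qed
  qed
qed

lemma F_meas: "(\<lambda>x. \<Sum>i=1..N. \<Sum>j=1..N. a i j * ee (phase x (s i) (t j))) \<in> borel_measurable lborel"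
  unfolding measurable_lborel2 ee_def phase_def
  by (intro borel_measurable_continuous_onI continuous_intros)

lemma main_bound:
  assumes N: "N \<ge> 1" and p: "p > 0"
    and st: "\<forall>i\<in>{1..N}. s i \<in> {(real i - 1) / real N <.. real i / real N} \<and> t i \<in> {(real i - 1) / real N <.. real i / real N}"
    and R: "R \<ge> (real N)^2"
  shows "(\<integral>\<^sup>+x. indicator (ball x0 R) x * ennreal (cmod (\<Sum>i=1..N. \<Sum>j=1..N. a i j * ee (phase x (s i) (t j))) powr p) \<partial>lborel)
     \<le> ennreal (2^111 * unit_ball_vol 5 * R^5 * Dec ((real N)^2) p powr p * (\<Sum>i=1..N. \<Sum>j=1..N. cmod (a i j) powr p))"
proof -
  define M where "M = (real N)^2"
  have Mp: "M > 0" unfolding M_def using N by simp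
  define V where "V = unit_ball_vol 5"
  define A where "A = (\<Sum>i=1..N. \<Sum>j=1..N. cmod (a i j) powr p)"
  define D where "D = Dec M p"
  define Bc where "Bc = D powr p * A * (64 * V * M^5)"
  have A0: "A \<ge> 0" unfolding A_def by (intro sum_nonneg) auto
  have Bc0: "Bc \<ge> 0" unfolding Bc_def V_def using unit_ball_vol_pos A0 Mp by (intro mult_nonneg_nonneg) auto
  obtain d where d: "d > 0" and gd: "\<And>n. good N s t (d / Suc n)" using exists_d[OF N st] by blast
  define Fn where "Fn n = ext_op unit_sq (gfun N a s t (d / Suc n))" for n
  define F where "F x = (\<Sum>i=1..N. \<Sum>j=1..N. a i j * ee (phase x (s i) (t j)))" for x
  define bnd where "bnd = 2^100 * 32 * R^5 * Bc / M^5"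
  have dn: "d / Suc n > 0" for n using d by simp
  have Fn_meas: "Fn n \<in> borel_measurable lborel" for n
    unfolding Fn_def by (rule ext_op_meas[OF gfun_int[OF unit_sq_sets dn]])
  define u where "u n x = indicator (ball x0 R) x * ennreal (cmod (Fn n x) powr p)" for n x
  have u_meas: "u n \<in> borel_measurable lborel" for n
    unfolding u_def using Fn_meas[of n] by measurable
  have ub: "integral\<^sup>N lborel (u n) \<le> ennreal bnd" for n
    unfolding u_def bnd_def
  proof (rule averaging[OF Mp _ Fn_meas Bc0])
    show "M \<le> R" using R unfolding M_def .
    fix c
    show "(\<integral>\<^sup>+x. ennreal (cmod (Fn n x) powr p * wB c M x) \<partial>lborel) \<le> ennreal Bc"
      unfolding Fn_def Bc_def D_def A_def V_def M_def using per_c_bound[OF gd N p] by (simp add: mult.assoc)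
  qed
  have conv: "(\<lambda>n. Fn n x) \<longlonglongrightarrow> F x" for x
  proof -
    have "Fn n x = (\<Sum>i=1..N. \<Sum>j=1..N. a i j * avg (d / Suc n) (s i) (t j) x)" for n
      unfolding Fn_def by (rule ext_gfun[OF gd])
    moreover have "(\<lambda>n. \<Sum>i=1..N. \<Sum>j=1..N. a i j * avg (d / Suc n) (s i) (t j) x) \<longlonglongrightarrow> F x"
      unfolding F_def by (intro tendsto_sum tendsto_mult_left avg_lim d)
    ultimately show ?thesis by simp
  qed
  have ulim: "liminf (\<lambda>n. u n x) = indicator (ball x0 R) x * ennreal (cmod (F x) powr p)" for x
  proof (rule lim_imp_Liminf)
    show "\<not> trivial_limit sequentially" by simp
    have "(\<lambda>n. cmod (Fn n x) powr p) \<longlonglongrightarrow> cmod (F x) powr p"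
      using p by (intro tendsto_powr' tendsto_norm conv tendsto_const) auto
    then have "(\<lambda>n. ennreal (cmod (Fn n x) powr p)) \<longlonglongrightarrow> ennreal (cmod (F x) powr p)"
      by (rule tendsto_ennrealI)
    then show "(\<lambda>n. u n x) \<longlonglongrightarrow> indicator (ball x0 R) x * ennreal (cmod (F x) powr p)"
      unfolding u_def by (cases "x \<in> ball x0 R") auto
  qed
  have "(\<integral>\<^sup>+x. indicator (ball x0 R) x * ennreal (cmod (F x) powr p) \<partial>lborel) = (\<integral>\<^sup>+x. liminf (\<lambda>n. u n x) \<partial>lborel)"
    by (simp add: ulim)
  also have "\<dots> \<le> liminf (\<lambda>n. integral\<^sup>N lborel (u n))"
    by (rule nn_integral_liminf[OF u_meas])
  also have "\<dots> \<le> ennreal bnd"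
    using ub by (intro Liminf_le) auto
  also have "bnd = 2^111 * V * R^5 * D powr p * A"
    unfolding bnd_def Bc_def using Mp by (simp add: field_simps)
  finally show ?thesis unfolding F_def V_def D_def A_def M_def .
qed




theorem theorem2p1:
  shows "\<exists>c>0. \<forall>p::real. p \<ge> 2 \<longrightarrow> (\<exists>C>0.
     \<forall>(N::nat) (s::nat \<Rightarrow> real) (t::nat \<Rightarrow> real) (R::real) (x0::real^5)
       (a::nat \<Rightarrow> nat \<Rightarrow> complex).
       N \<ge> 1 \<longrightarrow>
       (\<forall>i\<in>{1..N}. s i \<in> {(real i - 1) / real N <.. real i / real N}
                   \<and> t i \<in> {(real i - 1) / real N <.. real i / real N}) \<longrightarrow>
       R \<ge> c * (real N)^2 \<longrightarrow>
       ((1 / measure lborel (ball x0 R)) *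
          (LINT x : ball x0 R | lborel.
             cmod (\<Sum>i=1..N. \<Sum>j=1..N. a i j * ee (phase x (s i) (t j))) powr p))
         powr (1 / p)
       \<le> C * Dec ((real N)^2) p * (\<Sum>i=1..N. \<Sum>j=1..N. cmod (a i j) powr p) powr (1 / p))"
proof (rule exI[of _ "1::real"], intro conjI allI impI)
  show "(0::real) < 1" by simp
  fix p :: real assume p2: "p \<ge> 2"
  have p: "p > 0" using p2 by simp
  show "\<exists>C>0. \<forall>(N::nat) (s::nat \<Rightarrow> real) (t::nat \<Rightarrow> real) (R::real) (x0::real^5)
       (a::nat \<Rightarrow> nat \<Rightarrow> complex).
       N \<ge> 1 \<longrightarrow>
       (\<forall>i\<in>{1..N}. s i \<in> {(real i - 1) / real N <.. real i / real N}
                   \<and> t i \<in> {(real i - 1) / real N <.. real i / real N}) \<longrightarrow>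
       R \<ge> 1 * (real N)^2 \<longrightarrow>
       ((1 / measure lborel (ball x0 R)) *
          (LINT x : ball x0 R | lborel.
             cmod (\<Sum>i=1..N. \<Sum>j=1..N. a i j * ee (phase x (s i) (t j))) powr p))
         powr (1 / p)
       \<le> C * Dec ((real N)^2) p * (\<Sum>i=1..N. \<Sum>j=1..N. cmod (a i j) powr p) powr (1 / p)"
  proof (rule exI[of _ "(2^111) powr (1/p)"], intro conjI allI impI)
    show "(0::real) < (2^111) powr (1/p)" by simp
    fix N :: nat and s t :: "nat \<Rightarrow> real" and R :: real and x0 :: "real^5" and a :: "nat \<Rightarrow> nat \<Rightarrow> complex"
    assume N: "N \<ge> 1"
      and st: "\<forall>i\<in>{1..N}. s i \<in> {(real i - 1) / real N <.. real i / real N} \<and> t i \<in> {(real i - 1) / real N <.. real i / real N}"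
      and R1: "R \<ge> 1 * (real N)^2"
    have R: "R \<ge> (real N)^2" using R1 by simp
    have "(real N)^2 > 0" using N by simp
    then have Rp: "R > 0" using R by linarith
    define F where "F x = (\<Sum>i=1..N. \<Sum>j=1..N. a i j * ee (phase x (s i) (t j)))" for x
    define V where "V = unit_ball_vol 5"
    define A where "A = (\<Sum>i=1..N. \<Sum>j=1..N. cmod (a i j) powr p)"
    define D where "D = Dec ((real N)^2) p"
    have V: "V > 0" unfolding V_def by (rule unit_ball_vol_pos)
    have A0: "A \<ge> 0" unfolding A_def by (intro sum_nonneg) auto
    have D0: "D \<ge> 0" unfolding D_def
      using Dec_prop(2)[OF N p, of "\<lambda>_. 0"] by (simp add: set_integrable_def)
    define X where "X = (LINT x : ball x0 R | lborel. cmod (F x) powr p)"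
    have Fm: "F \<in> borel_measurable lborel" unfolding F_def by (rule F_meas)
    have Xm: "(\<lambda>x. indicator (ball x0 R) x *\<^sub>R cmod (F x) powr p) \<in> borel_measurable lborel"
      using Fm by measurable
    have "X = enn2real (\<integral>\<^sup>+x. ennreal (indicator (ball x0 R) x *\<^sub>R cmod (F x) powr p) \<partial>lborel)"
      unfolding X_def set_lebesgue_integral_def
      by (rule integral_eq_nn_integral[OF Xm]) auto
    also have "(\<integral>\<^sup>+x. ennreal (indicator (ball x0 R) x *\<^sub>R cmod (F x) powr p) \<partial>lborel)
       = (\<integral>\<^sup>+x. indicator (ball x0 R) x * ennreal (cmod (F x) powr p) \<partial>lborel)"
      by (intro nn_integral_cong) (simp add: indicator_def)
    finally have Xe: "X = enn2real (\<integral>\<^sup>+x. indicator (ball x0 R) x * ennreal (cmod (F x) powr p) \<partial>lborel)" .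
    have mb: "(\<integral>\<^sup>+x. indicator (ball x0 R) x * ennreal (cmod (F x) powr p) \<partial>lborel) \<le> ennreal (2^111 * V * R^5 * D powr p * A)"
      unfolding F_def V_def D_def A_def by (rule main_bound[OF N p st R])
    have nn: "0 \<le> 2^111 * V * R^5 * D powr p * A"
      using V A0 Rp by (intro mult_nonneg_nonneg) auto
    have Xb: "X \<le> 2^111 * V * R^5 * D powr p * A"
      unfolding Xe by (rule enn2real_leI[OF nn mb])
    have X0: "X \<ge> 0" unfolding Xe by simp
    have vol: "measure lborel (ball x0 R) = V * R^5" unfolding V_def using content_ball[where c=x0 and r=R] Rp by simp
    have "(1 / measure lborel (ball x0 R)) * X \<le> 2^111 * D powr p * A"
      using Xb V Rp unfolding vol by (simp add: field_simps)
    then have "((1 / measure lborel (ball x0 R)) * X) powr (1/p) \<le> (2^111 * D powr p * A) powr (1/p)"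
      using X0 V Rp p unfolding vol by (intro powr_mono2) auto
    also have "\<dots> = (2^111) powr (1/p) * D * A powr (1/p)"
      using D0 A0 p by (simp add: powr_mult powr_powr)
    finally show "((1 / measure lborel (ball x0 R)) *
          (LINT x : ball x0 R | lborel.
             cmod (\<Sum>i=1..N. \<Sum>j=1..N. a i j * ee (phase x (s i) (t j))) powr p))
         powr (1 / p)
       \<le> (2^111) powr (1/p) * Dec ((real N)^2) p * (\<Sum>i=1..N. \<Sum>j=1..N. cmod (a i j) powr p) powr (1 / p)"
      unfolding X_def F_def D_def A_def .
  qed
qed


end
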